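(* Suppose that $\psi$ is an orthonormal differentiable wavelet such that $\psi$ and $\psi'$ have a common radial decreasing $L^1$-majorant $W$ satisfying $\int_0^\infty sW(s)\,ds<\infty$. Then the family $\{K_\varepsilon\}_{\varepsilon\in\mathcal{E}}$, $K_\varepsilon(x,y)=\sum_{j,k\in\mathbb{Z}}\varepsilon_{j,k}\psi_{j,k}(x)\overline{\psi_{j,k}(y)}$, is a uniform in $\mathcal{E}$ family of standard kernels, with constants $C_1,C_2,C_3$ depending only on $W$.
   Context: A function $\psi\in L^2(\mathbb{R})$ is an orthonormal wavelet if $\psi_{j,k}(x)=2^{j/2}\psi(2^jx-k)$, $j,k\in\mathbb{Z}$, form an orthonormal basis of $L^2(\mathbb{R})$. A function $W:[0,\infty)\to(0,\infty)$ is a radial decreasing $L^1$-majorant of $g$ if $|g(x)|\le W(|x|)$ a.e., $W\in L^1([0,\infty))$, $W$ is decreasing and $W(0)<\infty$. $\mathcal{E}$ is the set of all sequences $\varepsilon=\{\varepsilon_{j,k}\}_{j,k\in\mathbb{Z}}$ with $\varepsilon_{j,k}\in\{-1,1\}$. A family $\{K_\omega\}_{\omega\in\Omega}$ of functions on $\mathbb{R}^2\setminus\{(x,x)\}$ is a uniform in $\Omega$ family of standard kernels if there exist $C_1,C_2,C_3\in(0,\infty)$ such that for all $\omega$ and all off-diagonal pairs: $|K_\omega(x,y)|\le C_1/|x-y|$; $|K_\omega(z,y)-K_\omega(x,y)|\le C_2|z-x|/|x-y|^2$ if $|z-x|\le\frac12|x-y|$; $|K_\omega(x,w)-K_\omega(x,y)|\le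 C_3|w-y|/|x-y|^2$ if $|w-y|\le\frac12|x-y|$. *)

theory Defs
  imports "HOL-Analysis.Analysis"
begin

definition L2 :: "(real \<Rightarrow> complex) \<Rightarrow> bool" where
  "L2 f \<longleftrightarrow> f \<in> borel_measurable lborel \<and> integrable lborel (\<lambda>x. (cmod (f x))\<^sup>2)"

definition L2_inner :: "(real \<Rightarrow> complex) \<Rightarrow> (real \<Rightarrow> complex) \<Rightarrow> complex" where
  "L2_inner f g = (LINT x|lborel. f x * cnj (g x))"

definition wav :: "(real \<Rightarrow> complex) \<Rightarrow> int \<Rightarrow> int \<Rightarrow> real \<Rightarrow> complex" where
  "wav \<psi> j k x = complex_of_real (2 powr (real_of_int j / 2)) * \<psi> (2 powr (real_of_int j) * x - real_of_int k)"

definition orthonormal_wavelet :: "(real \<Rightarrow> complex) \<Rightarrow> bool" where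
  "orthonormal_wavelet \<psi> \<longleftrightarrow>
     L2 \<psi> \<and>
     (\<forall>j k j' k'. L2_inner (wav \<psi> j k) (wav \<psi> j' k') = (if (j, k) = (j', k') then 1 else 0)) \<and>
     (\<forall>f. L2 f \<and> (\<forall>j k. L2_inner f (wav \<psi> j k) = 0) \<longrightarrow> (AE x in lborel. f x = 0))"

definition radial_decr_L1_majorant :: "(real \<Rightarrow> real) \<Rightarrow> (real \<Rightarrow> complex) \<Rightarrow> bool" where
  "radial_decr_L1_majorant W g \<longleftrightarrow>
     (\<forall>s\<ge>0. W s > 0) \<and> set_integrable lborel {0..} W \<and> antimono_on {0..} W \<and>
     (AE x in lborel. cmod (g x) \<le> W \<bar>x\<bar>)"

definition wav_kernel :: "(real \<Rightarrow> complex) \<Rightarrow> (int \<Rightarrow> int \<Rightarrow> real) \<Rightarrow> real \<Rightarrow> real \<Rightarrow> complex" where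
  "wav_kernel \<psi> \<epsilon> x y =
     (\<Sum>\<^sub>\<infinity>(j, k)\<in>UNIV. complex_of_real (\<epsilon> j k) * wav \<psi> j k x * cnj (wav \<psi> j k y))"

definition standard_kernel_with :: "real \<Rightarrow> real \<Rightarrow> real \<Rightarrow> (real \<Rightarrow> real \<Rightarrow> complex) \<Rightarrow> bool" where
  "standard_kernel_with C1 C2 C3 K \<longleftrightarrow>
     (\<forall>x y. x \<noteq> y \<longrightarrow> cmod (K x y) \<le> C1 / \<bar>x - y\<bar>) \<and>
     (\<forall>x y z. x \<noteq> y \<and> \<bar>z - x\<bar> \<le> \<bar>x - y\<bar> / 2 \<longrightarrow>
        cmod (K z y - K x y) \<le> C2 * \<bar>z - x\<bar> / \<bar>x - y\<bar>\<^sup>2) \<and>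
     (\<forall>x y w. x \<noteq> y \<and> \<bar>w - y\<bar> \<le> \<bar>x - y\<bar> / 2 \<longrightarrow>
        cmod (K x w - K x y) \<le> C3 * \<bar>w - y\<bar> / \<bar>x - y\<bar>\<^sup>2)"

end

theory Submission
  imports Defs
begin


locale Wmaj =
  fixes W :: "real \<Rightarrow> real"
  assumes W_pos: "\<forall>s\<ge>0. W s > 0"
    and W_int: "set_integrable lborel {0..} W"
    and W_decr: "antimono_on {0..} W"
    and W_moment: "set_integrable lborel {0..} (\<lambda>s. s * W s)"
begin

lemma Wdec: "0 \<le> s \<Longrightarrow> s \<le> t \<Longrightarrow> W t \<le> W s"
  using W_decr by (auto simp: monotone_on_def)

lemma Wpos: "0 \<le> s \<Longrightarrow> 0 < W s"
  using W_pos by auto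

definition I1 where "I1 = integral {0..} W"
definition I2 where "I2 = integral {0..} (\<lambda>s. s * W s)"
definition Psi where "Psi t = integral {0..t} W"
definition Phi where "Phi t = integral {0..t} (\<lambda>s. s * W s)"

lemma W_integrable: "S \<in> sets lborel \<Longrightarrow> S \<subseteq> {0..} \<Longrightarrow> W integrable_on S"
  using set_borel_integral_eq_integral(1)[OF set_integrable_subset[OF W_int]] by auto

lemma sW_integrable: "S \<in> sets lborel \<Longrightarrow> S \<subseteq> {0..} \<Longrightarrow> (\<lambda>s. s * W s) integrable_on S"
  using set_borel_integral_eq_integral(1)[OF set_integrable_subset[OF W_moment]] by auto

lemma Psi_le: "0 \<le> t \<Longrightarrow> Psi t \<le> I1"
  unfolding Psi_def I1_def
  by (rule integral_subset_le) (auto intro!: W_integrable less_imp_le[OF Wpos])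

lemma Phi_le: "0 \<le> t \<Longrightarrow> Phi t \<le> I2"
  unfolding Phi_def I2_def
  by (rule integral_subset_le) (auto intro!: sW_integrable mult_nonneg_nonneg less_imp_le[OF Wpos])

lemma Psi_split: "0 \<le> s \<Longrightarrow> s \<le> t \<Longrightarrow> Psi t = Psi s + integral {s..t} W"
  unfolding Psi_def
  using Henstock_Kurzweil_Integration.integral_combine[where a=0 and c=s and b=t and f=W] W_integrable[of "{0..t}"] by auto

lemma Phi_split: "0 \<le> s \<Longrightarrow> s \<le> t \<Longrightarrow> Phi t = Phi s + integral {s..t} (\<lambda>s. s * W s)"
  unfolding Phi_def
  using Henstock_Kurzweil_Integration.integral_combine[where a=0 and c=s and b=t and f="\<lambda>s. s * W s"] sW_integrable[of "{0..t}"] by auto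

lemma int_lower: "0 \<le> s \<Longrightarrow> s \<le> t \<Longrightarrow> (t - s) * W t \<le> integral {s..t} W"
proof -
  assume h: "0 \<le> s" "s \<le> t"
  have "integral {s..t} (\<lambda>_. W t) \<le> integral {s..t} W"
    by (rule integral_le) (use h in \<open>auto intro!: W_integrable Wdec\<close>)
  then show ?thesis using h by simp
qed

lemma int_lower2: "0 \<le> s \<Longrightarrow> s \<le> t \<Longrightarrow> (t - s) * (s * W t) \<le> integral {s..t} (\<lambda>s. s * W s)"
proof -
  assume h: "0 \<le> s" "s \<le> t"
  have "integral {s..t} (\<lambda>_. s * W t) \<le> integral {s..t} (\<lambda>s. s * W s)"
    by (rule integral_le) (use h in \<open>auto intro!: sW_integrable mult_mono Wdec less_imp_le[OF Wpos]\<close>)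
  then show ?thesis using h by (simp add: mult_ac)
qed

lemma Psi_mono: "0 \<le> s \<Longrightarrow> s \<le> t \<Longrightarrow> Psi s \<le> Psi t"
  using Psi_split int_lower[of s t] Wpos[of t] by (smt (verit) mult_nonneg_nonneg)

lemma Phi_mono: "0 \<le> s \<Longrightarrow> s \<le> t \<Longrightarrow> Phi s \<le> Phi t"
  using Phi_split int_lower2[of s t] Wpos[of t] by (smt (verit) mult_nonneg_nonneg)

lemma Psi_nonneg: "0 \<le> t \<Longrightarrow> 0 \<le> Psi t"
  using Psi_mono[of 0 t] by (simp add: Psi_def)

lemma Phi_nonneg: "0 \<le> t \<Longrightarrow> 0 \<le> Phi t"
  using Phi_mono[of 0 t] by (simp add: Phi_def)

lemma sW_bound: "0 \<le> s \<Longrightarrow> s * W s \<le> 2 * (Psi s - Psi (s/2))"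
  using Psi_split[of "s/2" s] int_lower[of "s/2" s] by simp

lemma s2W_bound: "0 \<le> s \<Longrightarrow> s^2 * W s \<le> 4 * (Phi s - Phi (s/2))"
  using Phi_split[of "s/2" s] int_lower2[of "s/2" s] by (simp add: power2_eq_square algebra_simps)

lemma sum_W_nat: "(\<Sum>n\<in>{1..N}. W (real n)) \<le> Psi (real N)"
proof (induction N)
  case 0 then show ?case by (simp add: Psi_def)
next
  case (Suc N)
  have "(\<Sum>n\<in>{1..Suc N}. W (real n)) = (\<Sum>n\<in>{1..N}. W (real n)) + W (real N + 1)"
    by (simp add: add.commute)
  also have "\<dots> \<le> Psi (real N) + integral {real N..real N + 1} W"
    using Suc int_lower[of "real N" "real N + 1"] by simp
  also have "\<dots> = Psi (real (Suc N))" using Psi_split[of "real N" "real N + 1"] by (simp add: add.commute)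
  finally show ?case .
qed

lemma sum_W_lessThan: "(\<Sum>n<N. W (real n)) \<le> W 0 + I1"
proof (cases N)
  case 0 then show ?thesis using Wpos[of 0] Psi_le[of 0] Psi_nonneg[of 0] by simp
next
  case (Suc M)
  have "(\<Sum>n<N. W (real n)) = W 0 + (\<Sum>n\<in>{1..M}. W (real n))"
    unfolding Suc lessThan_Suc_atMost atMost_atLeast0 by (simp add: sum.atLeast_Suc_atMost)
  then show ?thesis using sum_W_nat[of M] Psi_le[of "real M"] by simp
qed

end

context Wmaj begin

definition U where "U s = 2 * W (max (s - 1) 0)"
definition LU where "LU = 4 * (2 * W 0 + I1)"
definition Q where "Q D = min (U 0) (2 * U D)"

lemma Upos: "0 < U s"
  unfolding U_def using Wpos[of "max (s - 1) 0"] by simp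

lemma Udec: "0 \<le> s \<Longrightarrow> s \<le> t \<Longrightarrow> U t \<le> U s"
  unfolding U_def by (auto intro!: Wdec)

lemma U0: "U 0 = 2 * W 0" by (simp add: U_def)

lemma I1_nonneg: "0 \<le> I1" using Psi_le[of 0] Psi_nonneg[of 0] by simp
lemma I2_nonneg: "0 \<le> I2" using Phi_le[of 0] Phi_nonneg[of 0] by simp

lemma LU_pos: "0 < LU" unfolding LU_def using Wpos[of 0] I1_nonneg by simp

lemma Q_dec: "0 \<le> s \<Longrightarrow> s \<le> t \<Longrightarrow> Q t \<le> Q s"
  unfolding Q_def using Udec[of s t] by linarith

lemma Q_nonneg: "0 \<le> Q s" unfolding Q_def using Upos[of 0] Upos[of s] by simp

lemma sum_U_nat: "(\<Sum>n<N. U (real n)) \<le> 2 * (2 * W 0 + I1)"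
proof (cases N)
  case 0 then show ?thesis using Wpos[of 0] I1_nonneg by simp
next
  case (Suc M)
  have "(\<Sum>n<N. U (real n)) = U 0 + (\<Sum>n<M. U (real (Suc n)))"
    unfolding Suc sum.lessThan_Suc_shift by simp
  also have "(\<Sum>n<M. U (real (Suc n))) = 2 * (\<Sum>n<M. W (real n))"
    by (simp add: U_def sum_distrib_left)
  finally show ?thesis using sum_W_lessThan[of M] U0 by simp
qed

lemma half_sum:
  fixes g :: "int \<Rightarrow> int"
  assumes "finite K" "inj_on g K" "\<forall>k\<in>K. 0 \<le> g k" "\<forall>k\<in>K. U (a k) \<le> U (of_int (g k))"
  shows "(\<Sum>k\<in>K. U (a k)) \<le> 2 * (2 * W 0 + I1)"
proof -
  let ?h = "\<lambda>k. nat (g k)"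
  have inj: "inj_on ?h K" using assms(2,3) unfolding inj_on_def by (metis eq_nat_nat_iff)
  have "(\<Sum>k\<in>K. U (a k)) \<le> (\<Sum>k\<in>K. U (real (?h k)))"
    by (rule sum_mono) (use assms(3,4) in auto)
  also have "\<dots> = (\<Sum>n\<in>?h ` K. U (real n))"
    by (rule sum.reindex[OF inj, symmetric, unfolded comp_def])
  also have "\<dots> \<le> (\<Sum>n<Suc (Max (?h ` K)). U (real n))"
  proof (rule sum_mono2)
    show "?h ` K \<subseteq> {..<Suc (Max (?h ` K))}"
      using assms(1) by (auto simp: less_Suc_eq_le)
  qed (auto intro: less_imp_le[OF Upos])
  also have "\<dots> \<le> 2 * (2 * W 0 + I1)" by (rule sum_U_nat)
  finally show ?thesis .
qed

lemma lattice_sum: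
  assumes "finite K"
  shows "(\<Sum>k\<in>K. U \<bar>u - of_int k\<bar>) \<le> LU"
proof -
  let ?Kp = "{k\<in>K. u \<le> of_int k}" and ?Km = "{k\<in>K. \<not> u \<le> of_int k}"
  have s: "(\<Sum>k\<in>K. U \<bar>u - of_int k\<bar>) = (\<Sum>k\<in>?Kp. U \<bar>u - of_int k\<bar>) + (\<Sum>k\<in>?Km. U \<bar>u - of_int k\<bar>)"
  proof -
    have "(\<Sum>k\<in>K. U \<bar>u - of_int k\<bar>) = (\<Sum>k\<in>?Kp \<union> ?Km. U \<bar>u - of_int k\<bar>)"
      by (rule sum.cong) auto
    also have "\<dots> = (\<Sum>k\<in>?Kp. U \<bar>u - of_int k\<bar>) + (\<Sum>k\<in>?Km. U \<bar>u - of_int k\<bar>)"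
      by (rule sum.union_disjoint) (use assms in auto)
    finally show ?thesis .
  qed
  have p: "(\<Sum>k\<in>?Kp. U \<bar>u - of_int k\<bar>) \<le> 2 * (2 * W 0 + I1)"
  proof (rule half_sum[where g = "\<lambda>k. k - \<lceil>u\<rceil>"])
    show "inj_on (\<lambda>k. k - \<lceil>u\<rceil>) ?Kp" by (auto simp: inj_on_def)
    show "\<forall>k\<in>?Kp. 0 \<le> k - \<lceil>u\<rceil>" by (auto simp: ceiling_le_iff)
    show "\<forall>k\<in>?Kp. U \<bar>u - of_int k\<bar> \<le> U (of_int (k - \<lceil>u\<rceil>))"
    proof
      fix k assume k: "k \<in> ?Kp"
      have "\<lceil>u\<rceil> \<le> k" using k by (auto simp: ceiling_le_iff)
      moreover have "u \<le> of_int \<lceil>u\<rceil>" by simp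
      ultimately show "U \<bar>u - of_int k\<bar> \<le> U (of_int (k - \<lceil>u\<rceil>))"
        using k by (intro Udec) auto
    qed
  qed (use assms in auto)
  have m: "(\<Sum>k\<in>?Km. U \<bar>u - of_int k\<bar>) \<le> 2 * (2 * W 0 + I1)"
  proof (rule half_sum[where g = "\<lambda>k. \<lfloor>u\<rfloor> - k"])
    show "inj_on (\<lambda>k. \<lfloor>u\<rfloor> - k) ?Km" by (auto simp: inj_on_def)
    show "\<forall>k\<in>?Km. 0 \<le> \<lfloor>u\<rfloor> - k" by (auto simp: le_floor_iff)
    show "\<forall>k\<in>?Km. U \<bar>u - of_int k\<bar> \<le> U (of_int (\<lfloor>u\<rfloor> - k))"
    proof
      fix k assume k: "k \<in> ?Km"
      have "k \<le> \<lfloor>u\<rfloor>" using k by (auto simp: le_floor_iff)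
      moreover have "of_int \<lfloor>u\<rfloor> \<le> u" by simp
      ultimately show "U \<bar>u - of_int k\<bar> \<le> U (of_int (\<lfloor>u\<rfloor> - k))"
        using k by (intro Udec) auto
    qed
  qed (use assms in auto)
  show ?thesis using s p m by (simp add: LU_def)
qed

lemma pair_sum:
  assumes "finite K"
  shows "(\<Sum>k\<in>K. U \<bar>u - of_int k\<bar> * U \<bar>v - of_int k\<bar>) \<le> LU * Q (\<bar>u - v\<bar> / 2)"
proof -
  have a: "(\<Sum>k\<in>K. U \<bar>u - of_int k\<bar> * U \<bar>v - of_int k\<bar>) \<le> (\<Sum>k\<in>K. U 0 * U \<bar>v - of_int k\<bar>)"
    by (rule sum_mono, rule mult_right_mono) (auto intro: Udec less_imp_le[OF Upos])
  also have "\<dots> \<le> U 0 * LU"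
    unfolding sum_distrib_left[symmetric] using lattice_sum[OF assms, of v] Upos[of 0]
    by (simp add: mult_left_mono)
  finally have 1: "(\<Sum>k\<in>K. U \<bar>u - of_int k\<bar> * U \<bar>v - of_int k\<bar>) \<le> U 0 * LU" .
  let ?D = "\<bar>u - v\<bar> / 2"
  have "(\<Sum>k\<in>K. U \<bar>u - of_int k\<bar> * U \<bar>v - of_int k\<bar>) \<le>
        (\<Sum>k\<in>K. U ?D * (U \<bar>u - of_int k\<bar> + U \<bar>v - of_int k\<bar>))"
  proof (rule sum_mono)
    fix k assume "k \<in> K"
    have pu: "0 < U \<bar>u - of_int k\<bar>" and pv: "0 < U \<bar>v - of_int k\<bar>" by (rule Upos)+
    show "U \<bar>u - of_int k\<bar> * U \<bar>v - of_int k\<bar> \<le> U ?D * (U \<bar>u - of_int k\<bar> + U \<bar>v - of_int k\<bar>)"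
    proof (cases "?D \<le> \<bar>u - of_int k\<bar>")
      case True
      then have "U \<bar>u - of_int k\<bar> \<le> U ?D" by (intro Udec) auto
      then have "U \<bar>u - of_int k\<bar> * U \<bar>v - of_int k\<bar> \<le> U ?D * U \<bar>v - of_int k\<bar>"
        using pv by (intro mult_right_mono) auto
      also have "\<dots> \<le> U ?D * (U \<bar>u - of_int k\<bar> + U \<bar>v - of_int k\<bar>)"
        using pu Upos[of ?D] by (intro mult_left_mono) auto
      finally show ?thesis .
    next
      case False
      moreover have "\<bar>u - v\<bar> \<le> \<bar>u - of_int k\<bar> + \<bar>v - of_int k\<bar>"
        using abs_triangle_ineq4[of "u - of_int k" "v - of_int k"] by simp
      ultimately have "?D \<le> \<bar>v - of_int k\<bar>" by argo
      then have "U \<bar>v - of_int k\<bar> \<le> U ?D" by (intro Udec) auto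
      then have "U \<bar>u - of_int k\<bar> * U \<bar>v - of_int k\<bar> \<le> U \<bar>u - of_int k\<bar> * U ?D"
        using pu by (intro mult_left_mono) auto
      also have "\<dots> \<le> U ?D * (U \<bar>u - of_int k\<bar> + U \<bar>v - of_int k\<bar>)"
        using pv Upos[of ?D] by (simp add: algebra_simps)
      finally show ?thesis .
    qed
  qed
  also have "\<dots> = U ?D * ((\<Sum>k\<in>K. U \<bar>u - of_int k\<bar>) + (\<Sum>k\<in>K. U \<bar>v - of_int k\<bar>))"
    by (simp add: sum.distrib[symmetric] sum_distrib_left)
  also have "\<dots> \<le> U ?D * (LU + LU)"
    using lattice_sum[OF assms, of u] lattice_sum[OF assms, of v] Upos[of ?D]
    by (intro mult_left_mono) auto
  finally have 2: "(\<Sum>k\<in>K. U \<bar>u - of_int k\<bar> * U \<bar>v - of_int k\<bar>) \<le> LU * (2 * U ?D)" by (simp add: mult_ac)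
  show ?thesis using 1 2 unfolding Q_def by (simp add: min_def mult.commute)
qed

end


lemma geo:
  fixes q c :: real
  assumes q: "1 < q" and fin: "finite J" and c: "0 \<le> c" and b: "\<forall>j\<in>J. q powr of_int j \<le> c"
  shows "(\<Sum>j\<in>J. q powr of_int j) \<le> c * q / (q - 1)"
proof (cases "J = {}")
  case True then show ?thesis using q c by simp
next
  case False
  define j0 where "j0 = Max J"
  have j0: "j0 \<in> J" "\<forall>j\<in>J. j \<le> j0" using fin False by (auto simp: j0_def)
  let ?h = "\<lambda>j. nat (j0 - j)"
  have inj: "inj_on ?h J"
  proof (rule inj_onI)
    fix x y assume xy: "x \<in> J" "y \<in> J" "nat (j0 - x) = nat (j0 - y)"
    then have "j0 - x = j0 - y" using j0 by (subst (asm) eq_nat_nat_iff) auto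
    then show "x = y" by simp
  qed
  have eq: "q powr of_int j = q powr of_int j0 * (1/q) ^ (?h j)" if "j \<in> J" for j
  proof -
    have "q powr of_int j = q powr (of_int j0 - of_int (j0 - j))" by simp
    also have "\<dots> = q powr of_int j0 / q powr (of_int (j0 - j))" using q by (simp add: powr_diff)
    also have "q powr (of_int (j0 - j)) = q ^ (?h j)"
      using q that j0 by (simp add: powr_realpow[symmetric])
    finally show ?thesis by (simp add: power_one_over divide_inverse power_inverse)
  qed
  have "(\<Sum>j\<in>J. q powr of_int j) = q powr of_int j0 * (\<Sum>j\<in>J. (1/q) ^ (?h j))"
    by (simp add: eq sum_distrib_left cong: sum.cong)
  also have "(\<Sum>j\<in>J. (1/q) ^ (?h j)) = (\<Sum>n\<in>?h ` J. (1/q) ^ n)"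
    by (rule sum.reindex[OF inj, symmetric, unfolded comp_def])
  also have "\<dots> \<le> (\<Sum>n. (1/q) ^ n)"
    by (rule sum_le_suminf) (use q fin in auto)
  also have "\<dots> = 1 / (1 - 1/q)" by (rule suminf_geometric) (use q in simp)
  also have "\<dots> = q / (q - 1)" using q by (simp add: field_simps)
  finally have "(\<Sum>j\<in>J. q powr of_int j) \<le> q powr of_int j0 * (q / (q - 1))"
    using q by (simp add: mult_left_mono)
  also have "\<dots> \<le> c * (q / (q - 1))" using b j0 q by (intro mult_right_mono) auto
  finally show ?thesis by simp
qed

lemma tele:
  fixes G :: "real \<Rightarrow> real"
  assumes mono: "\<And>s t. 0 \<le> s \<Longrightarrow> s \<le> t \<Longrightarrow> G s \<le> G t"
    and nonneg: "\<And>s. 0 \<le> s \<Longrightarrow> 0 \<le> G s" and bnd: "\<And>s. 0 \<le> s \<Longrightarrow> G s \<le> Gm"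
    and e: "0 < e" and fin: "finite J"
  shows "(\<Sum>j\<in>J. G (2 powr of_int j * e) - G (2 powr of_int j * e / 2)) \<le> Gm"
proof (cases "J = {}")
  case True then show ?thesis using nonneg[of 0] bnd[of 0] by simp
next
  case False
  define m where "m = Min J"
  have m: "\<forall>j\<in>J. m \<le> j" using fin False by (auto simp: m_def)
  let ?h = "\<lambda>j. nat (j - m)"
  have inj: "inj_on ?h J" using m unfolding inj_on_def by (metis diff_ge_0_iff_ge eq_diff_eq eq_nat_nat_iff)
  define f where "f i = G (2 powr of_int (m + int i) * e / 2)" for i
  have eq: "G (2 powr of_int j * e) - G (2 powr of_int j * e / 2) = f (Suc (?h j)) - f (?h j)"
    if "j \<in> J" for j
  proof -
    have jj: "m + int (?h j) = j" using m that by auto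
    have hA: "2 powr of_int (m + int (Suc (?h j))) * e / 2 = 2 powr of_int j * e"
      using jj by (simp add: powr_add algebra_simps)
    have A: "f (Suc (?h j)) = G (2 powr of_int j * e)" unfolding f_def hA by (rule refl)
    have B: "f (?h j) = G (2 powr of_int j * e / 2)" unfolding f_def jj by (rule refl)
    show ?thesis unfolding A B ..
  qed
  have "(\<Sum>j\<in>J. G (2 powr of_int j * e) - G (2 powr of_int j * e / 2)) = (\<Sum>j\<in>J. f (Suc (?h j)) - f (?h j))"
    by (rule sum.cong) (auto simp: eq)
  also have "\<dots> = (\<Sum>i\<in>?h ` J. f (Suc i) - f i)"
    by (rule sum.reindex[OF inj, symmetric, unfolded comp_def])
  also have "\<dots> \<le> (\<Sum>i<Suc (Max (?h ` J)). f (Suc i) - f i)"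
  proof (rule sum_mono2)
    show "?h ` J \<subseteq> {..<Suc (Max (?h ` J))}" using fin by (auto simp: less_Suc_eq_le)
    show "0 \<le> f (Suc i) - f i" for i
    proof -
      have "2 powr of_int (m + int i) * e / 2 \<le> 2 powr of_int (m + int (Suc i)) * e / 2"
        using e by (intro divide_right_mono mult_right_mono) auto
      then show ?thesis unfolding f_def using e by (auto intro!: mono)
    qed
  qed auto
  also have "\<dots> = f (Suc (Max (?h ` J))) - f 0" by (rule sum_lessThan_telescope)
  also have "\<dots> \<le> Gm" unfolding f_def using e
    by (smt (verit) bnd nonneg divide_nonneg_pos mult_nonneg_nonneg powr_ge_zero)
  finally show ?thesis .
qed

context Wmaj begin

lemma Q_le_W: "2 \<le> t \<Longrightarrow> Q t \<le> 4 * W (t / 2)"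
proof -
  assume t: "2 \<le> t"
  have "Q t \<le> 2 * U t" by (simp add: Q_def)
  also have "U t = 2 * W (t - 1)" using t by (simp add: U_def max_def)
  also have "W (t - 1) \<le> W (t / 2)" using t by (intro Wdec) auto
  finally show ?thesis by simp
qed

lemma Q_le0: "Q t \<le> U 0" by (simp add: Q_def)

lemma dyadic1:
  assumes e: "0 < e" and fin: "finite J"
  shows "(\<Sum>j\<in>J. 2 powr of_int j * Q (2 powr of_int j * e)) \<le> (4 * U 0 + 16 * I1) / e"
proof -
  let ?f = "\<lambda>j. 2 powr of_int j * Q (2 powr of_int j * e)"
  let ?Js = "{j\<in>J. 2 powr of_int j * e \<le> 2}" and ?Jl = "{j\<in>J. \<not> 2 powr of_int j * e \<le> 2}"
  have split: "(\<Sum>j\<in>J. ?f j) = (\<Sum>j\<in>?Js. ?f j) + (\<Sum>j\<in>?Jl. ?f j)"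
  proof -
    have "(\<Sum>j\<in>J. ?f j) = (\<Sum>j\<in>?Js \<union> ?Jl. ?f j)" by (rule sum.cong) auto
    also have "\<dots> = (\<Sum>j\<in>?Js. ?f j) + (\<Sum>j\<in>?Jl. ?f j)" by (rule sum.union_disjoint) (use fin in auto)
    finally show ?thesis .
  qed
  have "(\<Sum>j\<in>?Js. ?f j) \<le> (\<Sum>j\<in>?Js. 2 powr of_int j * U 0)"
    by (rule sum_mono) (auto intro: mult_left_mono Q_le0)
  also have "\<dots> = U 0 * (\<Sum>j\<in>?Js. 2 powr of_int j)" by (simp add: sum_distrib_left mult.commute)
  also have "\<dots> \<le> U 0 * ((2 / e) * 2 / (2 - 1))"
    using e fin Upos[of 0]
    by (intro mult_left_mono geo) (auto simp: field_simps)
  finally have s1: "(\<Sum>j\<in>?Js. ?f j) \<le> 4 * U 0 / e" by (simp add: algebra_simps)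
  have "(\<Sum>j\<in>?Jl. ?f j) \<le> (\<Sum>j\<in>?Jl. (16 / e) * (Psi (2 powr of_int j * (e/2)) - Psi (2 powr of_int j * (e/2) / 2)))"
  proof (rule sum_mono)
    fix j assume j: "j \<in> ?Jl"
    define a :: real where "a = 2 powr of_int j"
    have a: "0 < a" "2 < a * e" using j by (auto simp: a_def)
    have "?f j = a * Q (a * e)" by (simp add: a_def)
    also have "\<dots> \<le> a * (4 * W (a * e / 2))" using a by (intro mult_left_mono Q_le_W) auto
    also have "\<dots> = (8 / e) * ((a * e / 2) * W (a * e / 2))" using e by (simp add: field_simps)
    also have "\<dots> \<le> (8 / e) * (2 * (Psi (a * e / 2) - Psi (a * e / 2 / 2)))"
      using e a by (intro mult_left_mono sW_bound) auto
    finally show "?f j \<le> (16 / e) * (Psi (2 powr of_int j * (e/2)) - Psi (2 powr of_int j * (e/2) / 2))"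
      by (simp add: a_def algebra_simps)
  qed
  also have "\<dots> = (16 / e) * (\<Sum>j\<in>?Jl. Psi (2 powr of_int j * (e/2)) - Psi (2 powr of_int j * (e/2) / 2))"
    by (simp add: sum_distrib_left)
  also have "\<dots> \<le> (16 / e) * I1"
    using e fin by (intro mult_left_mono tele[where Gm = I1]) (auto intro: Psi_mono Psi_nonneg Psi_le)
  finally have s2: "(\<Sum>j\<in>?Jl. ?f j) \<le> 16 * I1 / e" by simp
  show ?thesis using split s1 s2 by (simp add: add_divide_distrib)
qed

lemma dyadic2:
  assumes e: "0 < e" and fin: "finite J"
  shows "(\<Sum>j\<in>J. (2 powr of_int j)^2 * Q (2 powr of_int j * e)) \<le> (8 * U 0 + 64 * I2) / e^2"
proof -
  let ?f = "\<lambda>j. (2 powr of_int j)^2 * Q (2 powr of_int j * e)"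
  let ?Js = "{j\<in>J. 2 powr of_int j * e \<le> 2}" and ?Jl = "{j\<in>J. \<not> 2 powr of_int j * e \<le> 2}"
  have split: "(\<Sum>j\<in>J. ?f j) = (\<Sum>j\<in>?Js. ?f j) + (\<Sum>j\<in>?Jl. ?f j)"
  proof -
    have "(\<Sum>j\<in>J. ?f j) = (\<Sum>j\<in>?Js \<union> ?Jl. ?f j)" by (rule sum.cong) auto
    also have "\<dots> = (\<Sum>j\<in>?Js. ?f j) + (\<Sum>j\<in>?Jl. ?f j)" by (rule sum.union_disjoint) (use fin in auto)
    finally show ?thesis .
  qed
  have sq: "(2 powr of_int j)^2 = (4::real) powr of_int j" for j :: int
    by (simp add: power2_eq_square powr_mult[symmetric])
  have "(\<Sum>j\<in>?Js. ?f j) \<le> (\<Sum>j\<in>?Js. 4 powr of_int j * U 0)"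
    by (rule sum_mono) (auto simp: sq intro: mult_left_mono Q_le0)
  also have "\<dots> = U 0 * (\<Sum>j\<in>?Js. 4 powr of_int j)" by (simp add: sum_distrib_left mult.commute)
  also have "\<dots> \<le> U 0 * ((2 / e)^2 * 4 / (4 - 1))"
  proof (intro mult_left_mono geo)
    show "\<forall>j\<in>?Js. 4 powr real_of_int j \<le> (2 / e)\<^sup>2"
    proof
      fix j assume j: "j \<in> ?Js"
      have "2 powr of_int j \<le> 2 / e" using j e by (auto simp: field_simps)
      then have "(2 powr of_int j)^2 \<le> (2 / e)^2" by (intro power_mono) auto
      then show "4 powr real_of_int j \<le> (2 / e)\<^sup>2" by (simp add: sq)
    qed
  qed (use e fin Upos[of 0] in auto)
  finally have s1: "(\<Sum>j\<in>?Js. ?f j) \<le> 8 * U 0 / e^2"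
    using Upos[of 0] e by (simp add: field_simps power2_eq_square)
  have "(\<Sum>j\<in>?Jl. ?f j) \<le> (\<Sum>j\<in>?Jl. (64 / e^2) * (Phi (2 powr of_int j * (e/2)) - Phi (2 powr of_int j * (e/2) / 2)))"
  proof (rule sum_mono)
    fix j assume j: "j \<in> ?Jl"
    define a :: real where "a = 2 powr of_int j"
    have a: "0 < a" "2 < a * e" using j by (auto simp: a_def)
    have "?f j = a^2 * Q (a * e)" by (simp add: a_def)
    also have "\<dots> \<le> a^2 * (4 * W (a * e / 2))" using a by (intro mult_left_mono Q_le_W) auto
    also have "\<dots> = (16 / e^2) * ((a * e / 2)^2 * W (a * e / 2))" using e by (simp add: field_simps power2_eq_square)
    also have "\<dots> \<le> (16 / e^2) * (4 * (Phi (a * e / 2) - Phi (a * e / 2 / 2)))"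
      using e a by (intro mult_left_mono s2W_bound) auto
    finally show "?f j \<le> (64 / e^2) * (Phi (2 powr of_int j * (e/2)) - Phi (2 powr of_int j * (e/2) / 2))"
      by (simp add: a_def algebra_simps)
  qed
  also have "\<dots> = (64 / e^2) * (\<Sum>j\<in>?Jl. Phi (2 powr of_int j * (e/2)) - Phi (2 powr of_int j * (e/2) / 2))"
    by (simp add: sum_distrib_left)
  also have "\<dots> \<le> (64 / e^2) * I2"
    using e fin by (intro mult_left_mono tele[where Gm = I2]) (auto intro: Phi_mono Phi_nonneg Phi_le)
  finally have s2: "(\<Sum>j\<in>?Jl. ?f j) \<le> 64 * I2 / e^2" by simp
  show ?thesis using split s1 s2 by (simp add: add_divide_distrib)
qed

end


locale psi_ctx = Wmaj +
  fixes \<psi> \<psi>' :: "real \<Rightarrow> complex"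
  assumes deriv: "\<forall>x. (\<psi> has_vector_derivative \<psi>' x) (at x)"
    and maj: "radial_decr_L1_majorant W \<psi>"
    and maj': "radial_decr_L1_majorant W \<psi>'"
begin

lemma negl_set:
  assumes "radial_decr_L1_majorant W g"
  obtains N where "negligible N" "\<And>x. x \<notin> N \<Longrightarrow> cmod (g x) \<le> W \<bar>x\<bar>"
proof -
  have "AE x in lborel. cmod (g x) \<le> W \<bar>x\<bar>" using assms by (simp add: radial_decr_L1_majorant_def)
  then have "AE x in lebesgue. cmod (g x) \<le> W \<bar>x\<bar>" by (rule AE_completion)
  then obtain N where "negligible N" "{x. \<not> cmod (g x) \<le> W \<bar>x\<bar>} \<subseteq> N"
    unfolding eventually_ae_filter_negligible by blast
  then show ?thesis using that by blast
qed

lemma mvt: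
  assumes ab: "a \<le> b" and B: "0 \<le> B" and bnd: "\<forall>s\<in>{a..b}. W \<bar>s\<bar> \<le> B"
  shows "cmod (\<psi> b - \<psi> a) \<le> B * (b - a)"
proof -
  obtain N where N: "negligible N" "\<And>x. x \<notin> N \<Longrightarrow> cmod (\<psi>' x) \<le> W \<bar>x\<bar>"
    using negl_set[OF maj'] by blast
  have "(\<psi>' has_integral \<psi> b - \<psi> a) {a..b}"
    by (rule fundamental_theorem_of_calculus) (use ab deriv in \<open>auto intro: has_vector_derivative_at_within\<close>)
  define g where "g x = (if x \<in> N then 0 else \<psi>' x)" for x
  have gi: "(g has_integral \<psi> b - \<psi> a) (cbox a b)"
    unfolding cbox_interval
    by (rule has_integral_spike[OF N(1) _ \<open>(\<psi>' has_integral \<psi> b - \<psi> a) {a..b}\<close>]) (auto simp: g_def)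
  have "norm (\<psi> b - \<psi> a) \<le> B * measure lborel (cbox a b)"
  proof (rule has_integral_bound[OF B gi])
    fix x assume x: "x \<in> cbox a b"
    show "norm (g x) \<le> B"
    proof (cases "x \<in> N")
      case True then show ?thesis using B by (simp add: g_def)
    next
      case False then show ?thesis using N(2)[OF False] bnd x by (force simp: g_def cbox_interval)
    qed
  qed
  then show ?thesis using ab by (simp add: cbox_interval)
qed

definition V where "V s = W (max (s - 1) 0)"

lemma V_U: "2 * V s = U s" by (simp add: V_def U_def)

lemma psi_diff:
  assumes h: "\<bar>h\<bar> \<le> 1"
  shows "cmod (\<psi> (t + h) - \<psi> t) \<le> \<bar>h\<bar> * V \<bar>t\<bar>"
proof -
  have B: "0 \<le> V \<bar>t\<bar>" unfolding V_def using Wpos[of "max (\<bar>t\<bar> - 1) 0"] by simp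
  have key: "W \<bar>s\<bar> \<le> V \<bar>t\<bar>" if "\<bar>s - t\<bar> \<le> \<bar>h\<bar>" for s
  proof -
    have "\<bar>t\<bar> - 1 \<le> \<bar>s\<bar>" using that h by argo
    then show ?thesis unfolding V_def by (intro Wdec) auto
  qed
  show ?thesis
  proof (cases "0 \<le> h")
    case True
    have "cmod (\<psi> (t + h) - \<psi> t) \<le> V \<bar>t\<bar> * (t + h - t)"
      by (rule mvt) (use True B key in \<open>auto\<close>)
    then show ?thesis using True by (simp add: mult.commute)
  next
    case False
    have "cmod (\<psi> t - \<psi> (t + h)) \<le> V \<bar>t\<bar> * (t - (t + h))"
      by (rule mvt) (use False B key in \<open>auto\<close>)
    then show ?thesis using False by (simp add: norm_minus_commute mult.commute)
  qed
qed

lemma psi_bound: "cmod (\<psi> t) \<le> U \<bar>t\<bar>"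
proof -
  obtain N where N: "negligible N" "\<And>x. x \<notin> N \<Longrightarrow> cmod (\<psi> x) \<le> W \<bar>x\<bar>"
    using negl_set[OF maj] by blast
  define I where "I = (if 0 \<le> t then {t<..<t+1} else {t-1<..<t})"
  have "\<not> negligible I"
    unfolding I_def by (auto simp: negligible_interval(2)[of _ "_::real", unfolded box_real])
  then have "\<not> I \<subseteq> N" using N(1) negligible_subset by blast
  then obtain s where s: "s \<in> I" "s \<notin> N" by blast
  have st: "\<bar>t\<bar> \<le> \<bar>s\<bar>" "\<bar>t - s\<bar> \<le> 1" using s(1) by (auto simp: I_def split: if_splits)
  have "cmod (\<psi> t) \<le> cmod (\<psi> s) + cmod (\<psi> (s + (t - s)) - \<psi> s)"
    by (simp add: norm_triangle_sub)
  also have "\<dots> \<le> W \<bar>s\<bar> + \<bar>t - s\<bar> * V \<bar>s\<bar>"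
    using N(2)[OF s(2)] psi_diff[OF st(2), of s] by linarith
  also have "\<dots> \<le> V \<bar>t\<bar> + 1 * V \<bar>t\<bar>"
  proof -
    have 1: "W \<bar>s\<bar> \<le> V \<bar>t\<bar>" unfolding V_def using st by (intro Wdec) auto
    have 2: "V \<bar>s\<bar> \<le> V \<bar>t\<bar>" unfolding V_def using st by (intro Wdec) auto
    have 3: "0 \<le> V \<bar>s\<bar>" unfolding V_def using Wpos[of "max (\<bar>s\<bar> - 1) 0"] by simp
    have "\<bar>t - s\<bar> * V \<bar>s\<bar> \<le> 1 * V \<bar>t\<bar>" using st(2) 2 3 by (intro mult_mono) auto
    then show ?thesis using 1 by linarith
  qed
  finally show ?thesis using V_U[of "\<bar>t\<bar>"] by simp
qed

lemma psi_diff_U: "\<bar>h\<bar> \<le> 1 \<Longrightarrow> cmod (\<psi> (t + h) - \<psi> t) \<le> \<bar>h\<bar> * U \<bar>t\<bar>"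
proof -
  assume h: "\<bar>h\<bar> \<le> 1"
  have "V \<bar>t\<bar> \<le> U \<bar>t\<bar>" using V_U[of "\<bar>t\<bar>"] Upos[of "\<bar>t\<bar>"] by simp
  then show ?thesis using psi_diff[OF h, of t] by (smt (verit) abs_ge_zero mult_left_mono)
qed

end


lemma dsum:
  fixes f :: "int \<times> int \<Rightarrow> real"
  assumes nn: "\<And>p. 0 \<le> f p"
    and inner: "\<And>j K. finite K \<Longrightarrow> (\<Sum>k\<in>K. f (j, k)) \<le> b j"
    and outer: "\<And>J. finite J \<Longrightarrow> (\<Sum>j\<in>J. b j) \<le> B"
  shows "f summable_on UNIV" "infsum f UNIV \<le> B"
proof -
  have fin: "sum f F \<le> B" if F: "finite F" for F
  proof -
    have sub: "F \<subseteq> fst ` F \<times> snd ` F" by (force simp: image_iff)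
    have "sum f F \<le> sum f (fst ` F \<times> snd ` F)"
      by (rule sum_mono2[OF _ sub]) (use F nn in auto)
    also have "\<dots> = (\<Sum>j\<in>fst ` F. \<Sum>k\<in>snd ` F. f (j, k))"
      by (simp add: sum.cartesian_product case_prod_unfold)
    also have "\<dots> \<le> (\<Sum>j\<in>fst ` F. b j)" by (rule sum_mono, rule inner) (use F in auto)
    also have "\<dots> \<le> B" by (rule outer) (use F in auto)
    finally show ?thesis .
  qed
  show s: "f summable_on UNIV"
    by (rule nonneg_bdd_above_summable_on) (use nn fin in \<open>auto intro!: bdd_aboveI[where M=B]\<close>)
  show "infsum f UNIV \<le> B"
    by (rule infsum_le_finite_sums[OF s]) (use fin in auto)
qed

lemma csum:
  fixes g :: "int \<times> int \<Rightarrow> complex"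
  assumes "(\<lambda>p. cmod (g p)) summable_on UNIV" "infsum (\<lambda>p. cmod (g p)) UNIV \<le> B"
  shows "g summable_on UNIV" "cmod (infsum g UNIV) \<le> B"
proof -
  show "g summable_on UNIV" by (rule abs_summable_summable) (use assms in simp)
  have "cmod (infsum g UNIV) \<le> infsum (\<lambda>p. cmod (g p)) UNIV"
    by (rule norm_infsum_bound) (use assms in simp)
  then show "cmod (infsum g UNIV) \<le> B" using assms(2) by linarith
qed

context psi_ctx begin

lemma wav_norm: "cmod (wav \<psi> j k x) = 2 powr (of_int j / 2) * cmod (\<psi> (2 powr of_int j * x - of_int k))"
  by (simp add: wav_def norm_mult)

lemma rr: "2 powr (of_int j / 2) * 2 powr (of_int j / 2) = (2::real) powr of_int j"
  by (simp add: powr_add[symmetric])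

lemma wav_diff_norm: "cmod (wav \<psi> j k q - wav \<psi> j k p) =
   2 powr (of_int j / 2) * cmod (\<psi> (2 powr of_int j * q - of_int k) - \<psi> (2 powr of_int j * p - of_int k))"
  by (simp add: wav_def norm_mult right_diff_distrib[symmetric])

lemma size_j:
  assumes K: "finite K"
  shows "(\<Sum>k\<in>K. cmod (wav \<psi> j k x) * cmod (wav \<psi> j k y))
         \<le> 2 powr of_int j * (LU * Q (2 powr of_int j * (\<bar>x - y\<bar> / 2)))"
proof -
  define a :: real where "a = 2 powr of_int j"
  define r :: real where "r = 2 powr (of_int j / 2)"
  have a: "0 < a" "r * r = a" "0 \<le> r" by (auto simp: a_def r_def rr)
  have "(\<Sum>k\<in>K. cmod (wav \<psi> j k x) * cmod (wav \<psi> j k y))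
      \<le> (\<Sum>k\<in>K. a * (U \<bar>a * x - of_int k\<bar> * U \<bar>a * y - of_int k\<bar>))"
  proof (rule sum_mono)
    fix k
    have "cmod (wav \<psi> j k x) * cmod (wav \<psi> j k y) = (r * r) * (cmod (\<psi> (a * x - of_int k)) * cmod (\<psi> (a * y - of_int k)))"
      by (simp add: wav_norm a_def r_def algebra_simps)
    also have "\<dots> \<le> a * (U \<bar>a * x - of_int k\<bar> * U \<bar>a * y - of_int k\<bar>)"
      unfolding a(2) using a(1) psi_bound by (intro mult_left_mono mult_mono) (auto intro: less_imp_le[OF Upos])
    finally show "cmod (wav \<psi> j k x) * cmod (wav \<psi> j k y) \<le> a * (U \<bar>a * x - of_int k\<bar> * U \<bar>a * y - of_int k\<bar>)" .
  qed
  also have "\<dots> = a * (\<Sum>k\<in>K. U \<bar>a * x - of_int k\<bar> * U \<bar>a * y - of_int k\<bar>)"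
    by (simp add: sum_distrib_left)
  also have "\<dots> \<le> a * (LU * Q (\<bar>a * x - a * y\<bar> / 2))"
    using a by (intro mult_left_mono pair_sum K) auto
  also have "\<bar>a * x - a * y\<bar> / 2 = a * (\<bar>x - y\<bar> / 2)"
    using a by (simp add: right_diff_distrib[symmetric] abs_mult)
  finally show ?thesis by (simp add: a_def)
qed

lemma diff_j:
  assumes K: "finite K" and qp: "\<bar>q - p\<bar> \<le> \<bar>p - r\<bar> / 2"
  shows "(\<Sum>k\<in>K. cmod (wav \<psi> j k q - wav \<psi> j k p) * cmod (wav \<psi> j k r))
         \<le> 2 * (2 powr of_int j)^2 * \<bar>q - p\<bar> * (LU * Q (2 powr of_int j * (\<bar>p - r\<bar> / 4)))"
proof -
  define a :: real where "a = 2 powr of_int j"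
  define \<rho> :: real where "\<rho> = 2 powr (of_int j / 2)"
  have a: "0 < a" "\<rho> * \<rho> = a" "0 \<le> \<rho>" by (auto simp: a_def \<rho>_def rr)
  let ?S = "(\<Sum>k\<in>K. cmod (wav \<psi> j k q - wav \<psi> j k p) * cmod (wav \<psi> j k r))"
  have nnQ: "0 \<le> LU * Q (a * (\<bar>p - r\<bar> / 4))" using LU_pos Q_nonneg by simp
  have Qm: "Q (a * (\<bar>p - r\<bar> / 2)) \<le> Q (a * (\<bar>p - r\<bar> / 4))"
    using a by (intro Q_dec) auto
  have eqd: "\<bar>a * p - a * r\<bar> / 2 = a * (\<bar>p - r\<bar> / 2)"
    using a by (simp add: right_diff_distrib[symmetric] abs_mult)
  have terms0: "cmod (wav \<psi> j k q - wav \<psi> j k p) * cmod (wav \<psi> j k r) =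
      (\<rho> * \<rho>) * (cmod (\<psi> (a * q - of_int k) - \<psi> (a * p - of_int k)) * cmod (\<psi> (a * r - of_int k)))" for k
    by (simp add: wav_norm wav_diff_norm a_def \<rho>_def algebra_simps)
  note terms = terms0[unfolded a(2)]
  show ?thesis
  proof (cases "a * \<bar>q - p\<bar> \<le> 1")
    case True
    have "?S \<le> (\<Sum>k\<in>K. a * ((a * \<bar>q - p\<bar>) * (U \<bar>a * p - of_int k\<bar> * U \<bar>a * r - of_int k\<bar>)))"
    proof (rule sum_mono)
      fix k
      have h: "\<bar>a * (q - p)\<bar> \<le> 1" using True a by (simp add: abs_mult)
      have "cmod (\<psi> (a * q - of_int k) - \<psi> (a * p - of_int k)) = cmod (\<psi> ((a * p - of_int k) + a * (q - p)) - \<psi> (a * p - of_int k))"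
        by (simp add: algebra_simps)
      also have "\<dots> \<le> \<bar>a * (q - p)\<bar> * U \<bar>a * p - of_int k\<bar>" by (rule psi_diff_U[OF h])
      finally have d: "cmod (\<psi> (a * q - of_int k) - \<psi> (a * p - of_int k)) \<le> (a * \<bar>q - p\<bar>) * U \<bar>a * p - of_int k\<bar>"
        using a by (simp add: abs_mult)
      have "cmod (\<psi> (a * q - of_int k) - \<psi> (a * p - of_int k)) * cmod (\<psi> (a * r - of_int k))
          \<le> ((a * \<bar>q - p\<bar>) * U \<bar>a * p - of_int k\<bar>) * U \<bar>a * r - of_int k\<bar>"
        using d psi_bound[of "a * r - of_int k"] a Upos[of "\<bar>a * p - of_int k\<bar>"]
        by (intro mult_mono) auto
      then show "cmod (wav \<psi> j k q - wav \<psi> j k p) * cmod (wav \<psi> j k r)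
          \<le> a * ((a * \<bar>q - p\<bar>) * (U \<bar>a * p - of_int k\<bar> * U \<bar>a * r - of_int k\<bar>))"
        unfolding terms using a by (intro mult_left_mono) (auto simp: mult.assoc)
    qed
    also have "\<dots> = a * (a * \<bar>q - p\<bar>) * (\<Sum>k\<in>K. U \<bar>a * p - of_int k\<bar> * U \<bar>a * r - of_int k\<bar>)"
      by (simp add: sum_distrib_left mult.assoc)
    also have "\<dots> \<le> a * (a * \<bar>q - p\<bar>) * (LU * Q (\<bar>a * p - a * r\<bar> / 2))"
      using a by (intro mult_left_mono pair_sum K) auto
    also have "\<dots> \<le> a * (a * \<bar>q - p\<bar>) * (LU * Q (a * (\<bar>p - r\<bar> / 4)))"
      unfolding eqd using a Qm LU_pos by (intro mult_left_mono) auto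
    also have "\<dots> \<le> 2 * a^2 * \<bar>q - p\<bar> * (LU * Q (a * (\<bar>p - r\<bar> / 4)))"
      using a nnQ LU_pos by (simp add: power2_eq_square mult_right_mono mult.assoc mult.left_commute Q_nonneg mult_nonneg_nonneg)
    finally show ?thesis by (simp add: a_def)
  next
    case False
    have "?S \<le> (\<Sum>k\<in>K. a * (U \<bar>a * q - of_int k\<bar> * U \<bar>a * r - of_int k\<bar> + U \<bar>a * p - of_int k\<bar> * U \<bar>a * r - of_int k\<bar>))"
    proof (rule sum_mono)
      fix k
      have d: "cmod (\<psi> (a * q - of_int k) - \<psi> (a * p - of_int k)) \<le> U \<bar>a * q - of_int k\<bar> + U \<bar>a * p - of_int k\<bar>"
        using norm_triangle_ineq4[of "\<psi> (a * q - of_int k)" "\<psi> (a * p - of_int k)"]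
          psi_bound[of "a * q - of_int k"] psi_bound[of "a * p - of_int k"] by linarith
      have "cmod (\<psi> (a * q - of_int k) - \<psi> (a * p - of_int k)) * cmod (\<psi> (a * r - of_int k))
          \<le> (U \<bar>a * q - of_int k\<bar> + U \<bar>a * p - of_int k\<bar>) * U \<bar>a * r - of_int k\<bar>"
        using d psi_bound[of "a * r - of_int k"] Upos[of "\<bar>a * q - of_int k\<bar>"] Upos[of "\<bar>a * p - of_int k\<bar>"]
        by (intro mult_mono) auto
      then show "cmod (wav \<psi> j k q - wav \<psi> j k p) * cmod (wav \<psi> j k r)
          \<le> a * (U \<bar>a * q - of_int k\<bar> * U \<bar>a * r - of_int k\<bar> + U \<bar>a * p - of_int k\<bar> * U \<bar>a * r - of_int k\<bar>)"
        unfolding terms using a by (intro mult_left_mono) (auto simp: algebra_simps)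
    qed
    also have "\<dots> = a * ((\<Sum>k\<in>K. U \<bar>a * q - of_int k\<bar> * U \<bar>a * r - of_int k\<bar>) + (\<Sum>k\<in>K. U \<bar>a * p - of_int k\<bar> * U \<bar>a * r - of_int k\<bar>))"
      by (simp add: sum.distrib[symmetric] sum_distrib_left)
    also have "\<dots> \<le> a * (LU * Q (\<bar>a * q - a * r\<bar> / 2) + LU * Q (\<bar>a * p - a * r\<bar> / 2))"
      using a by (intro mult_left_mono add_mono pair_sum K) auto
    also have "\<dots> \<le> a * (LU * Q (a * (\<bar>p - r\<bar> / 4)) + LU * Q (a * (\<bar>p - r\<bar> / 4)))"
    proof -
      have "\<bar>p - r\<bar> / 4 \<le> \<bar>q - r\<bar> / 2" using qp by argo
      then have "a * (\<bar>p - r\<bar> / 4) \<le> \<bar>a * q - a * r\<bar> / 2"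
        using a by (simp add: right_diff_distrib[symmetric] abs_mult)
      then have 1: "Q (\<bar>a * q - a * r\<bar> / 2) \<le> Q (a * (\<bar>p - r\<bar> / 4))"
        using a by (intro Q_dec) auto
      show ?thesis unfolding eqd using 1 Qm a LU_pos
        by (intro mult_left_mono add_mono) auto
    qed
    also have "\<dots> = 2 * a * (LU * Q (a * (\<bar>p - r\<bar> / 4)))" by simp
    also have "\<dots> \<le> 2 * (a * (a * \<bar>q - p\<bar>)) * (LU * Q (a * (\<bar>p - r\<bar> / 4)))"
      using False a nnQ by (intro mult_right_mono) auto
    finally show ?thesis by (simp add: a_def power2_eq_square mult.assoc)
  qed
qed

end


lemma infsum_diff':
  fixes f g :: "'a \<Rightarrow> complex"
  assumes "f summable_on A" "g summable_on A"
  shows "infsum (\<lambda>x. f x - g x) A = infsum f A - infsum g A"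
proof -
  have ng: "(\<lambda>x. - g x) summable_on A" using assms(2) by (simp add: summable_on_uminus)
  have "infsum (\<lambda>x. f x + - g x) A = infsum f A + infsum (\<lambda>x. - g x) A"
    by (rule infsum_add[OF assms(1) ng])
  then show ?thesis by (simp add: infsum_uminus)
qed

context psi_ctx begin

lemma size_sum:
  assumes xy: "x \<noteq> y" and g: "\<And>j k. cmod (g (j, k)) \<le> cmod (wav \<psi> j k x) * cmod (wav \<psi> j k y)"
  shows "g summable_on UNIV" "cmod (infsum g UNIV) \<le> 2 * LU * (4 * U 0 + 16 * I1) / \<bar>x - y\<bar>"
proof -
  define d where "d = \<bar>x - y\<bar>"
  have d: "0 < d" using xy by (simp add: d_def)
  let ?b = "\<lambda>j. 2 powr of_int j * (LU * Q (2 powr of_int j * (d / 2)))"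
  let ?f = "\<lambda>p. cmod (g p)"
  have inner: "(\<Sum>k\<in>K. ?f (j, k)) \<le> ?b j" if "finite K" for j K
  proof -
    have "(\<Sum>k\<in>K. ?f (j, k)) \<le> (\<Sum>k\<in>K. cmod (wav \<psi> j k x) * cmod (wav \<psi> j k y))"
      by (rule sum_mono) (rule g)
    also have "\<dots> \<le> ?b j" unfolding d_def by (rule size_j[OF that])
    finally show ?thesis .
  qed
  have outer: "(\<Sum>j\<in>J. ?b j) \<le> LU * ((4 * U 0 + 16 * I1) / (d / 2))" if "finite J" for J
  proof -
    have "(\<Sum>j\<in>J. ?b j) = LU * (\<Sum>j\<in>J. 2 powr of_int j * Q (2 powr of_int j * (d / 2)))"
      by (simp add: sum_distrib_left mult_ac)
    also have "\<dots> \<le> LU * ((4 * U 0 + 16 * I1) / (d / 2))"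
      using LU_pos d that by (intro mult_left_mono dyadic1) auto
    finally show ?thesis .
  qed
  note D = dsum[of ?f ?b, OF _ inner outer]
  have C: "g summable_on UNIV \<and> cmod (infsum g UNIV) \<le> LU * ((4 * U 0 + 16 * I1) / (d / 2))"
    using csum[OF D] by simp
  then show "g summable_on UNIV" by simp
  have "LU * ((4 * U 0 + 16 * I1) / (d / 2)) = 2 * LU * (4 * U 0 + 16 * I1) / \<bar>x - y\<bar>"
    using d by (simp add: d_def field_simps)
  then show "cmod (infsum g UNIV) \<le> 2 * LU * (4 * U 0 + 16 * I1) / \<bar>x - y\<bar>" using C by simp
qed

lemma diff_sum:
  assumes pr: "p \<noteq> r" and qp: "\<bar>q - p\<bar> \<le> \<bar>p - r\<bar> / 2"
    and g: "\<And>j k. cmod (g (j, k)) \<le> cmod (wav \<psi> j k q - wav \<psi> j k p) * cmod (wav \<psi> j k r)"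
  shows "g summable_on UNIV" "cmod (infsum g UNIV) \<le> 32 * LU * (8 * U 0 + 64 * I2) * \<bar>q - p\<bar> / \<bar>p - r\<bar>^2"
proof -
  define d where "d = \<bar>p - r\<bar>"
  have d: "0 < d" using pr by (simp add: d_def)
  let ?b = "\<lambda>j. 2 * (2 powr of_int j)^2 * \<bar>q - p\<bar> * (LU * Q (2 powr of_int j * (d / 4)))"
  let ?f = "\<lambda>p. cmod (g p)"
  have inner: "(\<Sum>k\<in>K. ?f (j, k)) \<le> ?b j" if "finite K" for j K
  proof -
    have "(\<Sum>k\<in>K. ?f (j, k)) \<le> (\<Sum>k\<in>K. cmod (wav \<psi> j k q - wav \<psi> j k p) * cmod (wav \<psi> j k r))"
      by (rule sum_mono) (rule g)
    also have "\<dots> \<le> ?b j" unfolding d_def by (rule diff_j[OF that qp])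
    finally show ?thesis .
  qed
  have outer: "(\<Sum>j\<in>J. ?b j) \<le> (2 * \<bar>q - p\<bar> * LU) * ((8 * U 0 + 64 * I2) / (d / 4)^2)" if "finite J" for J
  proof -
    have "(\<Sum>j\<in>J. ?b j) = (2 * \<bar>q - p\<bar> * LU) * (\<Sum>j\<in>J. (2 powr of_int j)^2 * Q (2 powr of_int j * (d / 4)))"
      by (simp add: sum_distrib_left mult_ac)
    also have "\<dots> \<le> (2 * \<bar>q - p\<bar> * LU) * ((8 * U 0 + 64 * I2) / (d / 4)^2)"
      using LU_pos d that by (intro mult_left_mono dyadic2) auto
    finally show ?thesis .
  qed
  note D = dsum[of ?f ?b, OF _ inner outer]
  have C: "g summable_on UNIV \<and> cmod (infsum g UNIV) \<le> (2 * \<bar>q - p\<bar> * LU) * ((8 * U 0 + 64 * I2) / (d / 4)^2)"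
    using csum[OF D] by simp
  then show "g summable_on UNIV" by simp
  have "(2 * \<bar>q - p\<bar> * LU) * ((8 * U 0 + 64 * I2) / (d / 4)^2) = 32 * LU * (8 * U 0 + 64 * I2) * \<bar>q - p\<bar> / \<bar>p - r\<bar>^2"
    using d by (simp add: d_def field_simps power2_eq_square)
  then show "cmod (infsum g UNIV) \<le> 32 * LU * (8 * U 0 + 64 * I2) * \<bar>q - p\<bar> / \<bar>p - r\<bar>^2" using C by simp
qed

end

theorem theorem2p5:
  fixes W :: "real \<Rightarrow> real"
  assumes W_pos: "\<forall>s\<ge>0. W s > 0"
    and W_int: "set_integrable lborel {0..} W"
    and W_decr: "antimono_on {0..} W"
    and W_moment: "set_integrable lborel {0..} (\<lambda>s. s * W s)"
  shows "\<exists>C1>0. \<exists>C2>0. \<exists>C3>0.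
    \<forall>(\<psi> :: real \<Rightarrow> complex) \<psi>'.
      orthonormal_wavelet \<psi> \<and>
      (\<forall>x. (\<psi> has_vector_derivative \<psi>' x) (at x)) \<and>
      radial_decr_L1_majorant W \<psi> \<and> radial_decr_L1_majorant W \<psi>'
      \<longrightarrow>
      (\<forall>\<epsilon> :: int \<Rightarrow> int \<Rightarrow> real. (\<forall>j k. \<epsilon> j k \<in> {-1, 1}) \<longrightarrow>
         (\<forall>x y. x \<noteq> y \<longrightarrow>
            (\<lambda>(j, k). complex_of_real (\<epsilon> j k) * wav \<psi> j k x * cnj (wav \<psi> j k y))
              summable_on UNIV) \<and>
         standard_kernel_with C1 C2 C3 (wav_kernel \<psi> \<epsilon>))"
proof -
  interpret Wmaj W using assms by unfold_locales
  define C1 where "C1 = 2 * LU * (4 * U 0 + 16 * I1)"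
  define C2 where "C2 = 32 * LU * (8 * U 0 + 64 * I2)"
  have C1: "0 < C1" unfolding C1_def using LU_pos Upos[of 0] I1_nonneg by simp
  have C2: "0 < C2" unfolding C2_def using LU_pos Upos[of 0] I2_nonneg by simp
  have main: "(\<forall>x y. x \<noteq> y \<longrightarrow>
            (\<lambda>(j, k). complex_of_real (\<epsilon> j k) * wav \<psi> j k x * cnj (wav \<psi> j k y))
              summable_on UNIV) \<and>
         standard_kernel_with C1 C2 C2 (wav_kernel \<psi> \<epsilon>)"
    if dv: "\<forall>x. (\<psi> has_vector_derivative \<psi>' x) (at x)"
      and m1: "radial_decr_L1_majorant W \<psi>" and m2: "radial_decr_L1_majorant W \<psi>'"
      and eps: "\<forall>j k. \<epsilon> j k \<in> {-1, 1}"
    for \<psi> \<psi>' :: "real \<Rightarrow> complex" and \<epsilon> :: "int \<Rightarrow> int \<Rightarrow> real"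
  proof -
    interpret P: psi_ctx W \<psi> \<psi>' by unfold_locales (use dv m1 m2 in auto)
    have ea: "\<bar>\<epsilon> j k\<bar> = 1" for j k
    proof -
      have "\<epsilon> j k = -1 \<or> \<epsilon> j k = 1" using eps by auto
      then show ?thesis by auto
    qed
    define T where "T x y = (\<lambda>(j, k). complex_of_real (\<epsilon> j k) * wav \<psi> j k x * cnj (wav \<psi> j k y))" for x y
    have normT: "cmod (T x y (j, k)) \<le> cmod (wav \<psi> j k x) * cmod (wav \<psi> j k y)" for x y j k
      by (simp add: T_def norm_mult ea)
    have KT: "wav_kernel \<psi> \<epsilon> x y = infsum (T x y) UNIV" for x y
      by (simp add: wav_kernel_def T_def)
    have S: "T x y summable_on UNIV" if "x \<noteq> y" for x y
      by (rule P.size_sum(1)[OF that normT])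
    have B1: "cmod (wav_kernel \<psi> \<epsilon> x y) \<le> C1 / \<bar>x - y\<bar>" if "x \<noteq> y" for x y
      unfolding KT C1_def by (rule P.size_sum(2)[OF that normT])
    have B2: "cmod (wav_kernel \<psi> \<epsilon> z y - wav_kernel \<psi> \<epsilon> x y) \<le> C2 * \<bar>z - x\<bar> / \<bar>x - y\<bar>\<^sup>2"
      if "x \<noteq> y" "\<bar>z - x\<bar> \<le> \<bar>x - y\<bar> / 2" for x y z
    proof -
      have zy: "z \<noteq> y"
      proof
        assume "z = y"
        then have "\<bar>x - y\<bar> \<le> \<bar>x - y\<bar> / 2" using that(2) by (simp add: abs_minus_commute)
        then show False using that(1) by simp
      qed
      have eq: "wav_kernel \<psi> \<epsilon> z y - wav_kernel \<psi> \<epsilon> x y = infsum (\<lambda>p. T z y p - T x y p) UNIV"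
        unfolding KT by (rule infsum_diff'[OF S[OF zy] S[OF that(1)], symmetric])
      have n: "cmod (T z y (j, k) - T x y (j, k)) \<le> cmod (wav \<psi> j k z - wav \<psi> j k x) * cmod (wav \<psi> j k y)" for j k
      proof -
        have "T z y (j, k) - T x y (j, k) = complex_of_real (\<epsilon> j k) * (wav \<psi> j k z - wav \<psi> j k x) * cnj (wav \<psi> j k y)"
          by (simp add: T_def algebra_simps)
        then show ?thesis by (simp add: norm_mult ea)
      qed
      show ?thesis unfolding eq C2_def
        by (rule P.diff_sum(2)[OF that(1) that(2), of "\<lambda>p. T z y p - T x y p", OF n])
    qed
    have B3: "cmod (wav_kernel \<psi> \<epsilon> x w - wav_kernel \<psi> \<epsilon> x y) \<le> C2 * \<bar>w - y\<bar> / \<bar>x - y\<bar>\<^sup>2"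
      if "x \<noteq> y" "\<bar>w - y\<bar> \<le> \<bar>x - y\<bar> / 2" for x y w
    proof -
      have xw: "x \<noteq> w"
      proof
        assume "x = w"
        then have "\<bar>x - y\<bar> \<le> \<bar>x - y\<bar> / 2" using that(2) by simp
        then show False using that(1) by simp
      qed
      have yx: "y \<noteq> x" "\<bar>w - y\<bar> \<le> \<bar>y - x\<bar> / 2" using that by (auto simp: abs_minus_commute)
      have eq: "wav_kernel \<psi> \<epsilon> x w - wav_kernel \<psi> \<epsilon> x y = infsum (\<lambda>p. T x w p - T x y p) UNIV"
        unfolding KT by (rule infsum_diff'[OF S[OF xw] S[OF that(1)], symmetric])
      have n: "cmod (T x w (j, k) - T x y (j, k)) \<le> cmod (wav \<psi> j k w - wav \<psi> j k y) * cmod (wav \<psi> j k x)" for j k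
      proof -
        have "T x w (j, k) - T x y (j, k) = complex_of_real (\<epsilon> j k) * wav \<psi> j k x * cnj (wav \<psi> j k w - wav \<psi> j k y)"
          by (simp add: T_def algebra_simps)
        then show ?thesis by (simp add: norm_mult ea mult.commute del: complex_cnj_diff)
      qed
      have "cmod (infsum (\<lambda>p. T x w p - T x y p) UNIV) \<le> C2 * \<bar>w - y\<bar> / \<bar>y - x\<bar>\<^sup>2"
        unfolding C2_def by (rule P.diff_sum(2)[OF yx, of "\<lambda>p. T x w p - T x y p", OF n])
      then show ?thesis unfolding eq by (simp add: abs_minus_commute)
    qed
    show ?thesis
      unfolding standard_kernel_with_def using S B1 B2 B3 by (auto simp: T_def)
  qed
  show ?thesis
    by (rule exI[of _ C1], rule conjI[OF C1], rule exI[of _ C2], rule conjI[OF C2],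
        rule exI[of _ C2], rule conjI[OF C2]) (use main in blast)
qed


end
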